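(* Let $n$ be a positive integer and $P\subseteq S_n$ a nonempty set of permutations. If $|P|\le n/2$ then $\mathrm{cr}(P)=n$. Moreover, there exists $P\subseteq S_n$ with $|P|=\lfloor n/2\rfloor+1$ and $\mathrm{cr}(P)<n$.
   Context: $S_n$ is the symmetric group on $\{1,\dots,n\}$, viewed as a metric space with the Hamming distance: the distance between $g,h\in S_n$ is the number of points $i$ with $g(i)\ne h(i)$. The covering radius $\mathrm{cr}(P)$ of a nonempty set $P\subseteq S_n$ is the smallest integer $r$ such that every permutation in $S_n$ is at distance at most $r$ from some element of $P$. *)

theory Defs
  imports "HOL-Combinatorics.Permutations"
begin

definition sym_grp :: "nat \<Rightarrow> (nat \<Rightarrow> nat) set" where
  "sym_grp n = {\<sigma>. \<sigma> permutes {1..n}}"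

definition hamming :: "nat \<Rightarrow> (nat \<Rightarrow> nat) \<Rightarrow> (nat \<Rightarrow> nat) \<Rightarrow> nat" where
  "hamming n g h = card {i \<in> {1..n}. g i \<noteq> h i}"

definition covering_radius :: "nat \<Rightarrow> (nat \<Rightarrow> nat) set \<Rightarrow> nat" where
  "covering_radius n P =
     (LEAST r. \<forall>g \<in> sym_grp n. \<exists>p \<in> P. hamming n g p \<le> r)"

end

theory Submission
  imports Defs
begin

lemma card_A_le:
  assumes g: "g permutes S" and fin: "finite P"
  shows "card {j\<in>S. \<exists>p\<in>P. g j = p i} \<le> card P"
proof -
  let ?A = "{j\<in>S. \<exists>p\<in>P. g j = p i}"
  let ?f = "\<lambda>j. SOME p. p \<in> P \<and> g j = p i"
  have fA: "?f j \<in> P \<and> g j = ?f j i" if "j \<in> ?A" for j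
  proof -
    from that obtain p where "p \<in> P" "g j = p i" by blast
    thus ?thesis by (metis (mono_tags, lifting) someI_ex)
  qed
  have "inj_on ?f ?A"
  proof (rule inj_onI)
    fix x y assume x: "x \<in> ?A" and y: "y \<in> ?A" and e: "?f x = ?f y"
    have "g x = g y" using fA[OF x] fA[OF y] e by simp
    thus "x = y" using permutes_inj[OF g] by (simp add: inj_eq)
  qed
  moreover have "?f ` ?A \<subseteq> P" using fA by blast
  ultimately show ?thesis using card_inj_on_le fin by blast
qed

lemma card_B_le:
  assumes fin: "finite P" and P: "\<And>p. p \<in> P \<Longrightarrow> p permutes S"
  shows "card {j\<in>S. \<exists>p\<in>P. p j = c} \<le> card P"
proof -
  let ?A = "{j\<in>S. \<exists>p\<in>P. p j = c}"
  let ?f = "\<lambda>j. SOME p. p \<in> P \<and> p j = c"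
  have fA: "?f j \<in> P \<and> ?f j j = c" if "j \<in> ?A" for j
  proof -
    from that obtain p where "p \<in> P" "p j = c" by blast
    thus ?thesis by (metis (mono_tags, lifting) someI_ex)
  qed
  have "inj_on ?f ?A"
  proof (rule inj_onI)
    fix x y assume x: "x \<in> ?A" and y: "y \<in> ?A" and e: "?f x = ?f y"
    obtain q where q: "q \<in> P" "q x = c" "q y = c" using fA[OF x] fA[OF y] e by metis
    thus "x = y" using permutes_inj[OF P[OF q(1)]] by (metis injD)
  qed
  moreover have "?f ` ?A \<subseteq> P" using fA by blast
  ultimately show ?thesis using card_inj_on_le fin by blast
qed

lemma avoid_exists:
  assumes fin: "finite P" and le: "2 * card P \<le> n"
    and P: "\<And>p. p \<in> P \<Longrightarrow> p permutes {1..n}"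
  shows "\<exists>g. g permutes {1..n} \<and> (\<forall>i\<in>{1..n}. \<forall>p\<in>P. g i \<noteq> p i)"
proof -
  define bad where "bad g = {i\<in>{1..n}. \<exists>p\<in>P. g i = p i}" for g :: "nat \<Rightarrow> nat"
  have "\<forall>g. g permutes {1..n} \<longrightarrow> card (bad g) = m \<longrightarrow>
          (\<exists>h. h permutes {1..n} \<and> (\<forall>i\<in>{1..n}. \<forall>p\<in>P. h i \<noteq> p i))" for m
  proof (induction m rule: less_induct)
    case (less m)
    show ?case
    proof (intro allI impI)
      fix g assume g: "g permutes {1..n}" and cm: "card (bad g) = m"
      show "\<exists>h. h permutes {1..n} \<and> (\<forall>i\<in>{1..n}. \<forall>p\<in>P. h i \<noteq> p i)"
      proof (cases "bad g = {}")
        case True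
        then show ?thesis using g unfolding bad_def by blast
      next
        case False
        then obtain i where i: "i \<in> bad g" by blast
        then have i1: "i \<in> {1..n}" and ip: "\<exists>p\<in>P. g i = p i" unfolding bad_def by auto
        define A where "A = {j\<in>{1..n}. \<exists>p\<in>P. g j = p i}"
        define B where "B = {j\<in>{1..n}. \<exists>p\<in>P. p j = g i}"
        have cA: "card A \<le> card P" unfolding A_def using card_A_le[OF g fin] .
        have cB: "card B \<le> card P" unfolding B_def using card_B_le[OF fin P] by blast
        have iAB: "i \<in> A \<inter> B" using i1 ip unfolding A_def B_def by auto
        have finAB: "finite A" "finite B" unfolding A_def B_def by auto
        have "card (A \<union> B) + card (A \<inter> B) = card A + card B"
          using card_Un_Int[OF finAB] by simp
        moreover have "card (A \<inter> B) \<ge> 1" using iAB finAB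
          by (metis One_nat_def Suc_leI card_gt_0_iff empty_iff finite_Int)
        ultimately have "card (A \<union> B) < n" using cA cB le by linarith
        hence "card (A \<union> B) < card {1..n}" by simp
        hence "\<not> {1..n} \<subseteq> A \<union> B"
          using card_mono[of "A \<union> B" "{1..n}"] finAB by auto
        then obtain j where j: "j \<in> {1..n}" "j \<notin> A \<union> B" by blast
        define h where "h = g \<circ> transpose i j"
        have h: "h permutes {1..n}" unfolding h_def
          by (rule permutes_compose[OF permutes_swap_id[OF i1 j(1)] g])
        have sub: "bad h \<subseteq> bad g - {i}"
        proof
          fix x assume x: "x \<in> bad h"
          then obtain p where p: "p \<in> P" "h x = p x" and x1: "x \<in> {1..n}" unfolding bad_def by auto
          show "x \<in> bad g - {i}"
          proof (cases "x = i")
            case True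
            then have "g j = p i" using p by (simp add: h_def)
            then have "j \<in> A" using j(1) p(1) unfolding A_def by auto
            then show ?thesis using j by auto
          next
            case xi: False
            show ?thesis
            proof (cases "x = j")
              case True
              then have "g i = p j" using p by (simp add: h_def)
              then have "j \<in> B" using j(1) p(1) unfolding B_def by auto
              then show ?thesis using j by auto
            next
              case False
              then have "g x = p x" using p xi by (simp add: h_def transpose_apply_other)
              then show ?thesis using x1 p(1) xi unfolding bad_def by auto
            qed
          qed
        qed
        have "bad g - {i} \<subset> bad g" using i by auto
        with sub have "bad h \<subset> bad g" by blast
        moreover have "finite (bad g)" unfolding bad_def by auto
        ultimately have "card (bad h) < m" using cm psubset_card_mono by blast
        then show ?thesis using less.IH h by blast
      qed
    qed
  qed
  thus ?thesis using permutes_id by blast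
qed

definition rot :: "nat \<Rightarrow> nat \<Rightarrow> nat \<Rightarrow> nat" where
  "rot m k i = (if 1 \<le> i \<and> i \<le> m+1 then (if i+k \<le> m+1 then i+k else i+k-(m+1)) else i)"

lemma rot_permutes:
  assumes "k \<le> m" "m+1 \<le> n"
  shows "rot m k permutes {1..n}"
proof (rule bij_imp_permutes)
  have inj: "inj_on (rot m k) {1..n}"
    using assms by (intro inj_onI) (auto simp: rot_def split: if_splits)
  have im: "rot m k ` {1..n} \<subseteq> {1..n}"
  proof
    fix y assume "y \<in> rot m k ` {1..n}"
    then obtain x where x: "x \<in> {1..n}" "y = rot m k x" by blast
    show "y \<in> {1..n}" using assms x unfolding rot_def by (auto split: if_splits)
  qed
  show "bij_betw (rot m k) {1..n} {1..n}"
    unfolding bij_betw_def using inj endo_inj_surj[OF _ im inj] by simp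
  show "\<And>x. x \<notin> {1..n} \<Longrightarrow> rot m k x = x" using assms by (auto simp: rot_def)
qed

lemma rot_hit:
  assumes "1 \<le> i" "i \<le> m+1" "1 \<le> t" "t \<le> m+1"
  shows "\<exists>k\<le>m. rot m k i = t"
proof (cases "i \<le> t")
  case True
  then show ?thesis using assms by (intro exI[of _ "t - i"]) (auto simp: rot_def)
next
  case False
  then show ?thesis using assms by (intro exI[of _ "t + (m+1) - i"]) (auto simp: rot_def)
qed

lemma hamming_le: "hamming n g p \<le> n"
proof -
  have "hamming n g p \<le> card {1..n}" unfolding hamming_def by (rule card_mono) auto
  thus ?thesis by simp
qed

theorem theorem6p1:
  fixes n :: nat
  assumes "n \<ge> 1"
  shows "(\<forall>P. P \<subseteq> sym_grp n \<and> P \<noteq> {} \<and> 2 * card P \<le> n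
              \<longrightarrow> covering_radius n P = n)
         \<and> (\<exists>P. P \<subseteq> sym_grp n \<and> card P = n div 2 + 1
              \<and> covering_radius n P < n)"
proof
  show "\<forall>P. P \<subseteq> sym_grp n \<and> P \<noteq> {} \<and> 2 * card P \<le> n
              \<longrightarrow> covering_radius n P = n"
  proof (intro allI impI)
    fix P assume H: "P \<subseteq> sym_grp n \<and> P \<noteq> {} \<and> 2 * card P \<le> n"
    have fin: "finite P" using H finite_permutations[of "{1..n}"] unfolding sym_grp_def
      by (meson finite_atLeastAtMost finite_subset)
    have Pp: "\<And>p. p \<in> P \<Longrightarrow> p permutes {1..n}" using H unfolding sym_grp_def by auto
    obtain g where g: "g permutes {1..n}" "\<forall>i\<in>{1..n}. \<forall>p\<in>P. g i \<noteq> p i"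
      using avoid_exists[OF fin _ Pp] H by blast
    have hg: "hamming n g p = n" if "p \<in> P" for p
    proof -
      have "{i \<in> {1..n}. g i \<noteq> p i} = {1..n}" using g(2) that by auto
      thus ?thesis unfolding hamming_def by simp
    qed
    show "covering_radius n P = n" unfolding covering_radius_def
    proof (rule Least_equality)
      show "\<forall>g\<in>sym_grp n. \<exists>p\<in>P. hamming n g p \<le> n" using H hamming_le by blast
      fix r assume "\<forall>g\<in>sym_grp n. \<exists>p\<in>P. hamming n g p \<le> r"
      then obtain p where "p \<in> P" "hamming n g p \<le> r" using g(1) unfolding sym_grp_def by blast
      thus "n \<le> r" using hg by auto
    qed
  qed
next
  define m where "m = n div 2"
  have mn: "m + 1 \<le> n" "n - m \<le> m + 1" using assms unfolding m_def by auto
  define P where "P = (\<lambda>k. rot m k) ` {0..m}"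
  have "P \<subseteq> sym_grp n" unfolding P_def sym_grp_def using rot_permutes mn by auto
  moreover have "card P = m + 1"
  proof -
    have "inj_on (\<lambda>k. rot m k) {0..m}"
    proof (rule inj_onI)
      fix a b assume "a \<in> {0..m}" "b \<in> {0..m}" "rot m a = rot m b"
      hence "rot m a 1 = rot m b 1" by simp
      thus "a = b" using \<open>a \<in> {0..m}\<close> \<open>b \<in> {0..m}\<close> by (auto simp: rot_def)
    qed
    thus ?thesis unfolding P_def by (simp add: card_image)
  qed
  moreover have "covering_radius n P \<le> n - 1" unfolding covering_radius_def
  proof (rule Least_le, intro ballI)
    fix g assume "g \<in> sym_grp n"
    hence g: "g permutes {1..n}" unfolding sym_grp_def by simp
    have "\<exists>i\<in>{1..n-m}. g i \<le> m + 1"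
    proof (rule ccontr)
      assume nt: "\<not> (\<exists>i\<in>{1..n-m}. g i \<le> m + 1)"
      have "g ` {1..n-m} \<subseteq> {m+2..n}"
      proof
        fix y assume "y \<in> g ` {1..n-m}"
        then obtain x where x: "x \<in> {1..n-m}" "y = g x" by blast
        have "x \<in> {1..n}" using x by auto
        hence "g x \<in> {1..n}" using permutes_in_image[OF g] by blast
        moreover have "\<not> g x \<le> m+1" using nt x(1) by blast
        ultimately show "y \<in> {m+2..n}" using x by auto
      qed
      moreover have "inj_on g {1..n-m}" using permutes_inj_on[OF g] .
      ultimately have "card {1..n-m} \<le> card {m+2..n}" using card_inj_on_le by blast
      thus False using mn by simp
    qed
    then obtain i where i: "i \<in> {1..n-m}" "g i \<le> m+1" by blast
    have gi: "g i \<ge> 1" using i mn permutes_in_image[OF g, of i] by auto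
    obtain k where k: "k \<le> m" "rot m k i = g i" using rot_hit[of i m "g i"] i gi mn by auto
    have "hamming n g (rot m k) \<le> card ({1..n} - {i})" unfolding hamming_def
      using k by (intro card_mono) auto
    also have "\<dots> = n - 1" using i mn by simp
    finally show "\<exists>p\<in>P. hamming n g p \<le> n - 1" using k unfolding P_def by auto
  qed
  ultimately show "\<exists>P. P \<subseteq> sym_grp n \<and> card P = n div 2 + 1 \<and> covering_radius n P < n"
    using assms unfolding m_def by (intro exI[of _ P]) auto
qed

end
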